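(* Let $H$ be a finite, connected, simple planar map with at least $3$ vertices. Let $LD(H)$ be the number of vertices of $H$ of degree at most $5$, and let $ME(H)=\sum_f(\deg[f]-3)$, the sum over all faces $f$ of $H$ including the external face. Then $LD(H)\ge\frac25 ME(H)+\frac{12}{5}$.
   Context: A planar map is a planar graph together with an embedding in the plane. $\deg[f]$ is the degree (length of the boundary walk) of the face $f$. $ME(H)$ equals the number of edges that can be added to $H$ while keeping it a simple planar map. *)

theory Defs
  imports Complex_Main "HOL-Combinatorics.Permutations"
begin

text \<open>Planar maps are represented combinatorially as rotation systems (combinatorial maps):
  a finite set D of darts (half-edges), a fixed-point-free involution alpha on D pairing the
  two darts of each edge, and a permutation sigma on D giving the cyclic order of darts around
  each vertex.  The map is planar (genus 0) iff V - E + F = 2 (for connected maps).\<close>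

definition orb :: "('d \<Rightarrow> 'd) \<Rightarrow> 'd \<Rightarrow> 'd set" where
  "orb f x = {(f ^^ n) x | n. True}"

definition orbs :: "('d \<Rightarrow> 'd) \<Rightarrow> 'd set \<Rightarrow> 'd set set" where
  "orbs f D = orb f ` D"

definition comb_map :: "'d set \<Rightarrow> ('d \<Rightarrow> 'd) \<Rightarrow> ('d \<Rightarrow> 'd) \<Rightarrow> bool" where
  "comb_map D \<alpha> \<sigma> \<longleftrightarrow> finite D \<and> \<alpha> permutes D \<and> \<sigma> permutes D
     \<and> (\<forall>d\<in>D. \<alpha> d \<noteq> d \<and> \<alpha> (\<alpha> d) = d)"

definition map_vertices :: "'d set \<Rightarrow> ('d \<Rightarrow> 'd) \<Rightarrow> ('d \<Rightarrow> 'd) \<Rightarrow> 'd set set" where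
  "map_vertices D \<alpha> \<sigma> = orbs \<sigma> D"

definition map_edges :: "'d set \<Rightarrow> ('d \<Rightarrow> 'd) \<Rightarrow> ('d \<Rightarrow> 'd) \<Rightarrow> 'd set set" where
  "map_edges D \<alpha> \<sigma> = orbs \<alpha> D"

definition map_faces :: "'d set \<Rightarrow> ('d \<Rightarrow> 'd) \<Rightarrow> ('d \<Rightarrow> 'd) \<Rightarrow> 'd set set" where
  "map_faces D \<alpha> \<sigma> = orbs (\<sigma> \<circ> \<alpha>) D"

definition vdeg :: "'d set \<Rightarrow> nat" where "vdeg v = card v"
definition fdeg :: "'d set \<Rightarrow> nat" where "fdeg f = card f"

definition map_connected :: "'d set \<Rightarrow> ('d \<Rightarrow> 'd) \<Rightarrow> ('d \<Rightarrow> 'd) \<Rightarrow> bool" where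
  "map_connected D \<alpha> \<sigma> \<longleftrightarrow>
     (\<forall>x\<in>D. \<forall>y\<in>D. (x, y) \<in> ({(d, \<sigma> d) | d. d \<in> D} \<union> {(d, \<alpha> d) | d. d \<in> D})\<^sup>*)"

definition map_planar :: "'d set \<Rightarrow> ('d \<Rightarrow> 'd) \<Rightarrow> ('d \<Rightarrow> 'd) \<Rightarrow> bool" where
  "map_planar D \<alpha> \<sigma> \<longleftrightarrow>
     int (card (map_vertices D \<alpha> \<sigma>)) - int (card (map_edges D \<alpha> \<sigma>))
       + int (card (map_faces D \<alpha> \<sigma>)) = 2"

text \<open>Simple: no loops, no multiple edges.\<close>
definition map_simple :: "'d set \<Rightarrow> ('d \<Rightarrow> 'd) \<Rightarrow> ('d \<Rightarrow> 'd) \<Rightarrow> bool" where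
  "map_simple D \<alpha> \<sigma> \<longleftrightarrow>
     (\<forall>d\<in>D. orb \<sigma> (\<alpha> d) \<noteq> orb \<sigma> d)
     \<and> (\<forall>d\<in>D. \<forall>d'\<in>D. orb \<sigma> d = orb \<sigma> d' \<and> orb \<sigma> (\<alpha> d) = orb \<sigma> (\<alpha> d') \<longrightarrow> d = d')"

definition LD :: "'d set \<Rightarrow> ('d \<Rightarrow> 'd) \<Rightarrow> ('d \<Rightarrow> 'd) \<Rightarrow> nat" where
  "LD D \<alpha> \<sigma> = card {v \<in> map_vertices D \<alpha> \<sigma>. vdeg v \<le> 5}"

definition ME :: "'d set \<Rightarrow> ('d \<Rightarrow> 'd) \<Rightarrow> ('d \<Rightarrow> 'd) \<Rightarrow> int" where
  "ME D \<alpha> \<sigma> = (\<Sum>f\<in>map_faces D \<alpha> \<sigma>. int (fdeg f) - 3)"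

end

theory Submission
  imports Defs "HOL-Combinatorics.Orbits"
begin

lemma orb_eq_orbit:
  assumes "f permutes D" "finite D"
  shows "orb f x = orbit f x"
  using orbit_altdef_permutation[of f x] assms
  by (auto simp: orb_def permutation_permutes)

lemma orb_in: "x \<in> orb f x"
  unfolding orb_def by (auto intro: exI[where x=0])

lemma orb_sub:
  assumes "f permutes D" "x \<in> D" shows "orb f x \<subseteq> D"
  using assms by (auto simp: orb_def permutes_in_funpow_image)

lemma orb_same:
  assumes "f permutes D" "finite D" "y \<in> orb f x"
  shows "orb f y = orb f x"
  using assms orbit_cyclic_eq3[OF cyclic_on_orbit[OF assms(1,2)], of y x]
  by (simp add: orb_eq_orbit[OF assms(1,2)])

lemma sum_orbs:
  assumes "f permutes D" "finite D"
  shows "(\<Sum>v\<in>orbs f D. card v) = card D"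
proof -
  have U: "\<Union>(orbs f D) = D"
  proof
    show "\<Union>(orbs f D) \<subseteq> D" unfolding orbs_def using orb_sub[OF assms(1)] by auto
    show "D \<subseteq> \<Union>(orbs f D)" unfolding orbs_def using orb_in by fast
  qed
  have fin: "\<And>A. A \<in> orbs f D \<Longrightarrow> finite A"
    unfolding orbs_def using orb_sub[OF assms(1)] assms(2) by (auto intro: finite_subset[of _ D])
  have pw: "pairwise disjnt (orbs f D)"
  proof (unfold pairwise_def disjnt_def, intro ballI impI)
    fix A B assume "A \<in> orbs f D" "B \<in> orbs f D" "A \<noteq> B"
    then obtain a b where ab: "A = orb f a" "B = orb f b" by (auto simp: orbs_def)
    show "A \<inter> B = {}"
    proof (rule ccontr)
      assume "A \<inter> B \<noteq> {}"
      then obtain y where "y \<in> orb f a" "y \<in> orb f b" using ab by auto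
      then have "orb f y = orb f a" "orb f y = orb f b" using orb_same[OF assms(1,2)] by blast+
      then show False using ab \<open>A \<noteq> B\<close> by simp
    qed
  qed
  show ?thesis using card_Union_disjoint[OF pw fin] U by simp
qed

lemma orb_inv:
  assumes "\<alpha> (\<alpha> d) = d"
  shows "orb \<alpha> d = {d, \<alpha> d}"
proof -
  have "(\<alpha> ^^ n) d \<in> {d, \<alpha> d}" for n
    by (induct n) (auto simp: assms)
  moreover have "\<alpha> d = (\<alpha> ^^ 1) d" by simp
  moreover have "d = (\<alpha> ^^ 0) d" by simp
  ultimately show ?thesis unfolding orb_def by blast
qed

theorem lemma17:
  fixes D :: "'d set" and \<alpha> \<sigma> :: "'d \<Rightarrow> 'd"
  assumes "comb_map D \<alpha> \<sigma>"
    and "map_connected D \<alpha> \<sigma>"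
    and "map_simple D \<alpha> \<sigma>"
    and "map_planar D \<alpha> \<sigma>"
    and "card (map_vertices D \<alpha> \<sigma>) \<ge> 3"
  shows "real (LD D \<alpha> \<sigma>) \<ge> 2/5 * real_of_int (ME D \<alpha> \<sigma>) + 12/5"
proof -
  have fD: "finite D" and pa: "\<alpha> permutes D" and ps: "\<sigma> permutes D"
    and inv: "\<forall>d\<in>D. \<alpha> d \<noteq> d \<and> \<alpha> (\<alpha> d) = d"
    using assms(1) by (auto simp: comb_map_def)
  have pf: "(\<sigma> \<circ> \<alpha>) permutes D" using pa ps by (rule permutes_compose)
  define V where "V = map_vertices D \<alpha> \<sigma>"
  define E where "E = map_edges D \<alpha> \<sigma>"
  define F where "F = map_faces D \<alpha> \<sigma>"
  have sV: "(\<Sum>v\<in>V. card v) = card D" using sum_orbs[OF ps fD] by (simp add: V_def map_vertices_def)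
  have sF: "(\<Sum>v\<in>F. card v) = card D" using sum_orbs[OF pf fD] by (simp add: F_def map_faces_def)
  have sE: "(\<Sum>v\<in>E. card v) = card D" using sum_orbs[OF pa fD] by (simp add: E_def map_edges_def)
  have c2: "\<forall>v\<in>E. card v = 2"
    using inv by (auto simp: E_def map_edges_def orbs_def orb_inv)
  hence "(\<Sum>v\<in>E. card v) = 2 * card E" by simp
  with sE have cE: "card D = 2 * card E" by simp
  have finV: "finite V" using fD by (simp add: V_def map_vertices_def orbs_def)
  have finF: "finite F" using fD by (simp add: F_def map_faces_def orbs_def)
  have ne: "\<forall>v\<in>V. card v \<ge> 1"
  proof
    fix v assume "v \<in> V"
    then obtain x where x: "x \<in> D" "v = orb \<sigma> x" by (auto simp: V_def map_vertices_def orbs_def)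
    have "finite v" using orb_sub[OF ps x(1)] fD x(2) finite_subset by blast
    moreover have "v \<noteq> {}" using orb_in[of x \<sigma>] x(2) by auto
    ultimately show "card v \<ge> 1" by (simp add: Suc_le_eq card_gt_0_iff)
  qed
  define L where "L = {v \<in> V. vdeg v \<le> 5}"
  define H where "H = {v \<in> V. \<not> vdeg v \<le> 5}"
  have VLH: "V = L \<union> H" "L \<inter> H = {}" by (auto simp: L_def H_def)
  have fLH: "finite L" "finite H" using finV by (auto simp: L_def H_def)
  have "(\<Sum>v\<in>V. card v) = (\<Sum>v\<in>L. card v) + (\<Sum>v\<in>H. card v)"
    unfolding VLH(1) using fLH VLH(2) by (rule sum.union_disjoint)
  moreover have "(\<Sum>v\<in>L. card v) \<ge> (\<Sum>v\<in>L. 1)"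
    by (rule sum_mono) (use ne in \<open>auto simp: L_def\<close>)
  moreover have "(\<Sum>v\<in>H. card v) \<ge> (\<Sum>v\<in>H. 6)"
    by (rule sum_mono) (auto simp: H_def vdeg_def)
  moreover have "card V = card L + card H"
  proof -
    have "V = L \<union> H" "L \<inter> H = {}" by (auto simp: L_def H_def)
    moreover have "finite L" "finite H" using finV by (auto simp: L_def H_def)
    ultimately show ?thesis by (simp add: card_Un_disjoint)
  qed
  ultimately have deg: "card D \<ge> card L + 6 * card H" using sV by simp
  have me: "ME D \<alpha> \<sigma> = int (card D) - 3 * int (card F)"
  proof -
    have "ME D \<alpha> \<sigma> = (\<Sum>f\<in>F. int (card f)) - (\<Sum>f\<in>F. 3)"
      by (simp add: ME_def F_def fdeg_def sum_subtractf)
    also have "\<dots> = int (card D) - 3 * int (card F)"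
      using sF by (simp flip: of_nat_sum)
    finally show ?thesis .
  qed
  have eu: "int (card V) - int (card E) + int (card F) = 2"
    using assms(4) by (simp add: map_planar_def V_def E_def F_def)
  have ld: "LD D \<alpha> \<sigma> = card L" by (simp add: LD_def L_def V_def)
  have "card V = card L + card H" using \<open>card V = card L + card H\<close> .
  have "5 * int (card L) \<ge> 2 * ME D \<alpha> \<sigma> + 12"
    using deg cE me eu \<open>card V = card L + card H\<close> by linarith
  hence "real (5 * card L) \<ge> real_of_int (2 * ME D \<alpha> \<sigma> + 12)" by linarith
  thus ?thesis unfolding ld by simp
qed

end
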